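(* Let $G$ be a commutative group, $H$ its torsion subgroup, and $U\subset G$ a nonempty finite set. If $U$ is contained in a single coset of $H$, then \[ \alpha(U)=\alpha'(U)=\alpha''(U)=\beta(U)=\beta'(U)=\beta''(U)=1; \] otherwise $\beta(U)\ge2$ and $\alpha(U)\ge3/2$.
   Context: With $A,B$ ranging over nonempty finite subsets of $G$: $\alpha(U)=\inf_{A\supset U,B\supset U}\frac{|A+B|}{\sqrt{|A||B|}}$; $\alpha'(U)=\inf_{A\supset U,B\supset U,|A|=|B|}\frac{|A+B|}{|A|}$; $\alpha''(U)=\inf_{A\supset U}\frac{|A+A|}{|A|}$; $\beta(U)=\inf_{A,B}\frac{|A+B+U|}{\sqrt{|A||B|}}$; $\beta'(U)=\inf_{A,B,|A|=|B|}\frac{|A+B+U|}{\sqrt{|A||B|}}$; $\beta''(U)=\inf_A\frac{|A+A+U|}{|A|}$. *)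

theory Defs
  imports Main Complex_Main
begin

definition sumset :: "'a::ab_group_add set \<Rightarrow> 'a set \<Rightarrow> 'a set" where
  "sumset A B = {a + b | a b. a \<in> A \<and> b \<in> B}"

definition nmul :: "nat \<Rightarrow> 'a::ab_group_add \<Rightarrow> 'a" where
  "nmul n x = (\<Sum>i<n. x)"

definition torsion :: "'a::ab_group_add set" where
  "torsion = {x. \<exists>n>0. nmul n x = 0}"

definition in_single_torsion_coset :: "'a::ab_group_add set \<Rightarrow> bool" where
  "in_single_torsion_coset U \<longleftrightarrow> (\<exists>g. \<forall>u\<in>U. u - g \<in> torsion)"

definition alpha :: "'a::ab_group_add set \<Rightarrow> real" where
  "alpha U = Inf {real (card (sumset A B)) / sqrt (real (card A) * real (card B)) | A B.
      finite A \<and> A \<noteq> {} \<and> finite B \<and> B \<noteq> {} \<and> U \<subseteq> A \<and> U \<subseteq> B}"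

definition alpha' :: "'a::ab_group_add set \<Rightarrow> real" where
  "alpha' U = Inf {real (card (sumset A B)) / real (card A) | A B.
      finite A \<and> A \<noteq> {} \<and> finite B \<and> B \<noteq> {} \<and> U \<subseteq> A \<and> U \<subseteq> B \<and> card A = card B}"

definition alpha'' :: "'a::ab_group_add set \<Rightarrow> real" where
  "alpha'' U = Inf {real (card (sumset A A)) / real (card A) | A.
      finite A \<and> A \<noteq> {} \<and> U \<subseteq> A}"

definition beta :: "'a::ab_group_add set \<Rightarrow> real" where
  "beta U = Inf {real (card (sumset (sumset A B) U)) / sqrt (real (card A) * real (card B)) | A B.
      finite A \<and> A \<noteq> {} \<and> finite B \<and> B \<noteq> {}}"

definition beta' :: "'a::ab_group_add set \<Rightarrow> real" where
  "beta' U = Inf {real (card (sumset (sumset A B) U)) / sqrt (real (card A) * real (card B)) | A B.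
      finite A \<and> A \<noteq> {} \<and> finite B \<and> B \<noteq> {} \<and> card A = card B}"

definition beta'' :: "'a::ab_group_add set \<Rightarrow> real" where
  "beta'' U = Inf {real (card (sumset (sumset A A) U)) / real (card A) | A.
      finite A \<and> A \<noteq> {}}"

end

theory Submission
  imports Defs
begin

lemma nmul_0[simp]: "nmul 0 x = 0" by (simp add: nmul_def)
lemma nmul_Suc: "nmul (Suc n) x = x + nmul n x" by (simp add: nmul_def add.commute)
lemma nmul_add: "nmul (m+n) x = nmul m x + nmul n x"
  by (induct m) (simp_all add: nmul_Suc add.assoc)
lemma nmul_1[simp]: "nmul 1 x = x" by (simp add: nmul_def)
lemma nmul_neg: "nmul n (-x) = - nmul n x"
  by (induct n) (simp_all add: nmul_Suc add.commute)
lemma nmul_mult_zero: "nmul n v = 0 \<Longrightarrow> nmul (q*n) v = 0"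
  by (induct q) (simp_all add: nmul_add)
lemma nmul_mod: assumes "nmul n v = 0" shows "nmul (i mod n) v = nmul i v"
proof -
  have "nmul i v = nmul (i div n * n + i mod n) v" by simp
  also have "\<dots> = nmul (i mod n) v" by (simp only: nmul_add nmul_mult_zero[OF assms]) simp
  finally show ?thesis by simp
qed

definition inford :: "'a::ab_group_add \<Rightarrow> bool" where
  "inford d \<longleftrightarrow> (\<forall>n>0. nmul n d \<noteq> 0)"

lemma nmul_eq0: "inford d \<Longrightarrow> nmul n d = 0 \<Longrightarrow> n = 0"
  by (auto simp: inford_def)

lemma nmul_inj_eq: assumes "inford d" "nmul m d = nmul n d" shows "m = n"
proof (rule ccontr)
  assume "m \<noteq> n"
  then consider "m < n" | "n < m" by linarith
  then show False
  proof cases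
    case 1
    then have "nmul n d = nmul m d + nmul (n-m) d" by (simp add: nmul_add[symmetric])
    with assms 1 show False using nmul_eq0[of d "n-m"] by simp
  next
    case 2
    then have "nmul m d = nmul n d + nmul (m-n) d" by (simp add: nmul_add[symmetric])
    with assms 2 show False using nmul_eq0[of d "m-n"] by simp
  qed
qed

lemma top_exists:
  assumes "inford d" "finite C" "c \<in> C"
  shows "\<exists>N. c + nmul N d \<in> C \<and> (\<forall>n. c + nmul n d \<in> C \<longrightarrow> n \<le> N)"
proof -
  let ?S = "(\<lambda>n. c + nmul n d) -` C"
  have inj: "inj (\<lambda>n. c + nmul n d)"
    by (rule injI) (use assms(1) nmul_inj_eq in auto)
  have fin: "finite ?S" by (rule finite_vimageI[OF assms(2) inj])
  have "0 \<in> ?S" using assms(3) by simp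
  then have ne: "?S \<noteq> {}" by blast
  have "Max ?S \<in> ?S" by (rule Max_in[OF fin ne])
  then have "c + nmul (Max ?S) d \<in> C" by simp
  moreover have "\<forall>n. c + nmul n d \<in> C \<longrightarrow> n \<le> Max ?S" using Max_ge[OF fin] by auto
  ultimately show ?thesis by blast
qed

definition drel :: "'a::ab_group_add \<Rightarrow> 'a \<Rightarrow> 'a \<Rightarrow> bool" where
  "drel d x y \<longleftrightarrow> (\<exists>n m. x + nmul n d = y + nmul m d)"
definition dcls :: "'a::ab_group_add \<Rightarrow> 'a \<Rightarrow> 'a set" where
  "dcls d x = {y. drel d x y}"

lemma drel_refl[simp]: "drel d x x" unfolding drel_def by (rule exI[of _ 0], rule exI[of _ 0]) simp
lemma drel_sym: "drel d x y \<Longrightarrow> drel d y x" unfolding drel_def by metis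
lemma drel_trans: assumes "drel d x y" "drel d y z" shows "drel d x z"
proof -
  obtain n m where 1: "x + nmul n d = y + nmul m d" using assms(1) by (auto simp: drel_def)
  obtain n' m' where 2: "y + nmul n' d = z + nmul m' d" using assms(2) by (auto simp: drel_def)
  have "x + nmul (n+n') d = (x + nmul n d) + nmul n' d" by (simp add: nmul_add add.assoc)
  also have "\<dots> = (y + nmul n' d) + nmul m d" using 1 by (simp add: add_ac)
  also have "\<dots> = z + nmul (m'+m) d" using 2 by (simp add: nmul_add add.assoc)
  finally show ?thesis unfolding drel_def by blast
qed
lemma drel_add: assumes "drel d x x'" "drel d y y'" shows "drel d (x+y) (x'+y')"
proof -
  obtain n m where 1: "x + nmul n d = x' + nmul m d" using assms(1) by (auto simp: drel_def)
  obtain n' m' where 2: "y + nmul n' d = y' + nmul m' d" using assms(2) by (auto simp: drel_def)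
  have "(x+y) + nmul (n+n') d = (x + nmul n d) + (y + nmul n' d)" by (simp add: nmul_add add_ac)
  also have "\<dots> = (x'+y') + nmul (m+m') d" using 1 2 by (simp add: nmul_add add_ac)
  finally show ?thesis unfolding drel_def by blast
qed
lemma drel_transl: "drel d (x+b) (y+b) \<longleftrightarrow> drel d x y"
proof -
  have "\<And>n m. (x + b + nmul n d = y + b + nmul m d) \<longleftrightarrow> (x + nmul n d = y + nmul m d)"
  proof -
    fix n m
    have "x + b + nmul n d = (x + nmul n d) + b" "y + b + nmul m d = (y + nmul m d) + b"
      by (simp_all add: add_ac)
    then show "(x + b + nmul n d = y + b + nmul m d) \<longleftrightarrow> (x + nmul n d = y + nmul m d)" by simp
  qed
  then show ?thesis unfolding drel_def by simp
qed
lemma drel_step: "drel d x (x + nmul n d)"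
  unfolding drel_def by (rule exI[of _ n], rule exI[of _ 0]) simp
lemma neg_aux: "(x::'a::ab_group_add) + - a = y + - b \<longleftrightarrow> y + a = x + b"
  apply (simp only: diff_conv_add_uminus[symmetric] diff_eq_eq)
  apply (simp only: diff_add_eq eq_diff_eq)
  by (simp add: add.commute eq_commute)

lemma drel_neg: "drel (-d) x y \<longleftrightarrow> drel d y x"
proof -
  have "\<And>n m. (x + nmul n (-d) = y + nmul m (-d)) \<longleftrightarrow> (y + nmul n d = x + nmul m d)"
    by (simp only: nmul_neg neg_aux)
  then show ?thesis unfolding drel_def by simp
qed
lemma dcls_self[simp]: "x \<in> dcls d x" by (simp add: dcls_def)
lemma dcls_eq: assumes "drel d x y" shows "dcls d x = dcls d y"
proof (rule set_eqI)
  fix z show "z \<in> dcls d x \<longleftrightarrow> z \<in> dcls d y"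
    using drel_trans[OF drel_sym[OF assms], of z] drel_trans[OF assms, of z] by (auto simp: dcls_def)
qed

lemma sumset_img: "sumset A B = (\<lambda>(a,b). a+b) ` (A \<times> B)"
  unfolding sumset_def by auto
lemma finite_sumset[simp]: "finite A \<Longrightarrow> finite B \<Longrightarrow> finite (sumset A B)"
  by (simp add: sumset_img)
lemma sumset_iff: "z \<in> sumset A B \<longleftrightarrow> (\<exists>a\<in>A. \<exists>b\<in>B. z = a + b)"
  unfolding sumset_def by auto
lemma sumset_mono: "A \<subseteq> A' \<Longrightarrow> B \<subseteq> B' \<Longrightarrow> sumset A B \<subseteq> sumset A' B'"
  unfolding sumset_def by blast
lemma sumset_comm_sub: "sumset A B \<subseteq> sumset B A"
proof
  fix z assume "z \<in> sumset A B"
  then obtain a b where "a \<in> A" "b \<in> B" "z = a + b" by (auto simp: sumset_iff)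
  then have "z = b + a" by (simp add: add.commute)
  with \<open>a \<in> A\<close> \<open>b \<in> B\<close> show "z \<in> sumset B A" by (auto simp: sumset_iff)
qed
lemma sumset_comm: "sumset A B = sumset B A"
  using sumset_comm_sub by blast
lemma card_transl: "card ((\<lambda>x. x + (c::'a::ab_group_add)) ` A) = card A"
  by (rule card_image) (simp add: inj_on_def)
lemma card_transl': "card ((\<lambda>x. (c::'a::ab_group_add) + x) ` A) = card A"
  by (rule card_image) (simp add: inj_on_def)
lemma card_sumset_ge:
  assumes "finite A" "finite B" "b \<in> B" shows "card A \<le> card (sumset A B)"
proof -
  have "(\<lambda>x. x + b) ` A \<subseteq> sumset A B" using assms unfolding image_subset_iff sumset_iff by blast
  then have "card ((\<lambda>x. x + b) ` A) \<le> card (sumset A B)" by (rule card_mono[rotated]) (simp add: assms)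
  then show ?thesis by (simp add: card_transl)
qed

lemma maxel:
  assumes "inford e" "finite X" "x \<in> X" "\<forall>y\<in>X. drel e x y"
  shows "\<exists>z\<in>X. \<forall>y\<in>X. \<exists>n. z = y + nmul n e"
proof -
  obtain N where N: "x + nmul N e \<in> X" "\<forall>n. x + nmul n e \<in> X \<longrightarrow> n \<le> N"
    using top_exists[OF assms(1-3)] by blast
  have "\<exists>n. x + nmul N e = y + nmul n e" if y: "y \<in> X" for y
  proof -
    obtain p q where pq: "x + nmul p e = y + nmul q e" using assms(4) y by (auto simp: drel_def)
    show ?thesis
    proof (cases "q \<le> p")
      case True
      have "nmul p e = nmul (p-q) e + nmul q e" using True by (simp add: nmul_add[symmetric])
      with pq have "y = x + nmul (p-q) e" by (simp add: add.assoc[symmetric])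
      with y N have le: "p - q \<le> N" by auto
      have eqn: "nmul N e = nmul (p-q) e + nmul (N - (p-q)) e" using le by (simp add: nmul_add[symmetric])
      have "x + nmul N e = (x + nmul (p-q) e) + nmul (N-(p-q)) e" by (simp only: eqn add.assoc)
      then show ?thesis using \<open>y = _\<close> by blast
    next
      case False
      have "nmul q e = nmul (q-p) e + nmul p e" using False by (simp add: nmul_add[symmetric])
      with pq have "x = y + nmul (q-p) e" by (simp add: add.assoc[symmetric])
      then have "x + nmul N e = y + nmul (q-p+N) e" by (simp add: nmul_add add.assoc)
      then show ?thesis by blast
    qed
  qed
  with N show ?thesis by blast
qed

lemma cd_class:
  assumes d: "inford d" and fin: "finite X" "finite Y" and ne: "x0 \<in> X" "y0 \<in> Y"
    and rX: "\<forall>x\<in>X. drel d x0 x" and rY: "\<forall>y\<in>Y. drel d y0 y"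
  shows "card X + card Y \<le> card (sumset X Y) + 1"
proof -
  obtain xM where xM: "xM \<in> X" "\<forall>x\<in>X. \<exists>n. xM = x + nmul n d"
    using maxel[OF d fin(1) ne(1) rX] by blast
  have dn: "inford (-d)" using d unfolding inford_def nmul_neg by simp
  have rY': "\<forall>y\<in>Y. drel (-d) y0 y"
  proof
    fix y assume "y \<in> Y"
    then have "drel d y0 y" using rY by blast
    then have "drel d y y0" by (rule drel_sym)
    then show "drel (-d) y0 y" by (simp only: drel_neg)
  qed
  obtain ym where ym: "ym \<in> Y" "\<forall>y\<in>Y. \<exists>n. ym = y + nmul n (-d)"
    using maxel[OF dn fin(2) ne(2) rY'] by (rule bexE)
  have ym': "\<exists>n. y = ym + nmul n d" if "y \<in> Y" for y
  proof -
    have "\<exists>n. ym = y + nmul n (-d)" using ym(2) that by (rule bspec)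
    then obtain n where "ym = y + nmul n (-d)" by (rule exE)
    then have "ym = y - nmul n d" by (simp only: nmul_neg diff_conv_add_uminus)
    then have "y = ym + nmul n d" by (simp only: diff_add_cancel)
    then show ?thesis by (rule exI)
  qed
  let ?P = "(\<lambda>x. x + ym) ` X" and ?Q = "(\<lambda>y. xM + y) ` Y"
  have sub: "?P \<union> ?Q \<subseteq> sumset X Y"
  proof
    fix z assume "z \<in> ?P \<union> ?Q"
    then show "z \<in> sumset X Y"
      unfolding sumset_iff using xM(1) ym(1) by blast
  qed
  have int: "?P \<inter> ?Q \<subseteq> {xM + ym}"
  proof
    fix z assume "z \<in> ?P \<inter> ?Q"
    then obtain x y where xy: "x \<in> X" "y \<in> Y" "z = x + ym" "z = xM + y" by blast
    obtain p where p: "xM = x + nmul p d" using xM xy by blast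
    obtain q where q: "y = ym + nmul q d" using ym' xy by blast
    have "x + ym + 0 = x + ym + nmul (p+q) d"
    proof -
      have "x + ym + nmul (p+q) d = (x + nmul p d) + (ym + nmul q d)"
        by (simp only: nmul_add add_ac)
      also have "\<dots> = xM + y" by (simp only: p q)
      also have "\<dots> = x + ym" using xy(3,4) by simp
      finally show ?thesis by simp
    qed
    then have "nmul (p+q) d = 0" by (simp only: add_left_cancel)
    then have "p + q = 0" by (rule nmul_eq0[OF d])
    then have "p = 0" by simp
    then have "xM = x" using p by simp
    then show "z \<in> {xM + ym}" using xy by simp
  qed
  have "card ?P + card ?Q = card (?P \<union> ?Q) + card (?P \<inter> ?Q)"
    by (rule card_Un_Int) (simp_all add: fin)
  moreover have "card (?P \<inter> ?Q) \<le> 1"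
    using card_mono[OF _ int] by simp
  moreover have "card (?P \<union> ?Q) \<le> card (sumset X Y)"
    by (rule card_mono[OF _ sub]) (simp add: fin)
  moreover have "card ?P = card X" "card ?Q = card Y" by (rule card_transl, rule card_transl')
  ultimately show ?thesis by linarith
qed

lemma dcls_disj:
  assumes "K \<in> dcls d ` S" "K' \<in> dcls d ` S" "K \<noteq> K'" shows "K \<inter> K' = {}"
proof (rule ccontr)
  assume "K \<inter> K' \<noteq> {}"
  then obtain z where z: "z \<in> K" "z \<in> K'" by blast
  obtain x y where "K = dcls d x" "K' = dcls d y" using assms by blast
  then have "drel d x z" "drel d y z" using z by (simp_all add: dcls_def)
  then have "dcls d x = dcls d z" "dcls d y = dcls d z" by (simp_all add: dcls_eq)
  with \<open>K = _\<close> \<open>K' = _\<close> assms(3) show False by simp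
qed

lemma card_slices:
  assumes "finite B" shows "card B = (\<Sum>K\<in>dcls d ` B. card (B \<inter> K))"
proof -
  have "B = (\<Union>K\<in>dcls d ` B. B \<inter> K)" by auto
  then have "card B = card (\<Union>K\<in>dcls d ` B. B \<inter> K)" by (rule arg_cong)
  also have "\<dots> = (\<Sum>K\<in>dcls d ` B. card (B \<inter> K))"
  proof (rule card_UN_disjoint)
    show "finite (dcls d ` B)" using assms by simp
    show "\<forall>i\<in>dcls d ` B. finite (B \<inter> i)" using assms by simp
    show "\<forall>i\<in>dcls d ` B. \<forall>j\<in>dcls d ` B. i \<noteq> j \<longrightarrow> B \<inter> i \<inter> (B \<inter> j) = {}"
    proof (intro ballI impI)
      fix i j assume "i \<in> dcls d ` B" "j \<in> dcls d ` B" "i \<noteq> j"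
      then have "i \<inter> j = {}" by (rule dcls_disj)
      then show "B \<inter> i \<inter> (B \<inter> j) = {}" by blast
    qed
  qed
  finally show ?thesis .
qed

lemma pigeon:
  assumes "finite B" "B \<noteq> {}"
  shows "\<exists>y0\<in>B. card B \<le> card (dcls d ` B) * card (B \<inter> dcls d y0)"
proof (rule ccontr)
  assume "\<not> ?thesis"
  then have lt: "\<forall>y\<in>B. card (dcls d ` B) * card (B \<inter> dcls d y) < card B" by auto
  have "card (dcls d ` B) * card B = (\<Sum>K\<in>dcls d ` B. card (dcls d ` B) * card (B \<inter> K))"
    by (simp add: card_slices[OF assms(1), of d] sum_distrib_left)
  also have "\<dots> < (\<Sum>K\<in>dcls d ` B. card B)"
    by (rule sum_strict_mono) (use assms lt in auto)
  also have "\<dots> = card (dcls d ` B) * card B" by simp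
  finally show False by simp
qed

lemma key_i:
  assumes d: "inford d" and fin: "finite A" "finite B" and y0: "y0 \<in> B"
  shows "card A + card (dcls d ` A) * card (B \<inter> dcls d y0) \<le> card (sumset A B) + card (dcls d ` A)"
proof -
  let ?Bs = "B \<inter> dcls d y0"
  let ?F = "\<lambda>K. sumset (A \<inter> K) ?Bs"
  have finBs: "finite ?Bs" using fin by simp
  have sub: "(\<Union>K\<in>dcls d ` A. ?F K) \<subseteq> sumset A B"
    by (rule UN_least, rule sumset_mono) auto
  have inc: "?F (dcls d x) \<subseteq> dcls d (x + y0)" for x
  proof
    fix z assume "z \<in> ?F (dcls d x)"
    then obtain a b where ab: "a \<in> dcls d x" "b \<in> dcls d y0" "z = a + b" unfolding sumset_iff by blast
    then have "drel d x a" "drel d y0 b" by (simp_all add: dcls_def)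
    then have "drel d (x + y0) (a + b)" by (rule drel_add)
    then show "z \<in> dcls d (x + y0)" using ab(3) by (simp add: dcls_def)
  qed
  have disj: "?F K \<inter> ?F K' = {}" if KK: "K \<in> dcls d ` A" "K' \<in> dcls d ` A" "K \<noteq> K'" for K K'
  proof (rule ccontr)
    assume "?F K \<inter> ?F K' \<noteq> {}"
    then obtain z where z: "z \<in> ?F K" "z \<in> ?F K'" by blast
    obtain x x' where xx: "K = dcls d x" "K' = dcls d x'" using KK(1,2) by blast
    have "z \<in> dcls d (x + y0)" "z \<in> dcls d (x' + y0)" using z inc xx by blast+
    then have "drel d (x + y0) z" "drel d (x' + y0) z" by (simp_all add: dcls_def)
    then have "drel d (x + y0) (x' + y0)" using drel_trans drel_sym by blast
    then have "drel d x x'" by (simp only: drel_transl)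
    then have "K = K'" using xx dcls_eq by blast
    with KK(3) show False by simp
  qed
  have cardU: "card (\<Union>K\<in>dcls d ` A. ?F K) = (\<Sum>K\<in>dcls d ` A. card (?F K))"
  proof (rule card_UN_disjoint)
    show "finite (dcls d ` A)" using fin by simp
    show "\<forall>i\<in>dcls d ` A. finite (?F i)" using fin by simp
    show "\<forall>i\<in>dcls d ` A. \<forall>j\<in>dcls d ` A. i \<noteq> j \<longrightarrow> ?F i \<inter> ?F j = {}"
      using disj by blast
  qed
  have each: "card (A \<inter> K) + card ?Bs \<le> card (?F K) + 1" if KA: "K \<in> dcls d ` A" for K
  proof -
    obtain x where x: "x \<in> A" "K = dcls d x" using KA by blast
    show ?thesis
    proof (rule cd_class[OF d _ finBs, of "A \<inter> K" x y0])
      show "finite (A \<inter> K)" using fin by simp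
      show "x \<in> A \<inter> K" using x by simp
      show "y0 \<in> ?Bs" using y0 by simp
      show "\<forall>xa\<in>A \<inter> K. drel d x xa" using x by (simp add: dcls_def)
      show "\<forall>y\<in>?Bs. drel d y0 y" by (simp add: dcls_def)
    qed
  qed
  have "card A + card (dcls d ` A) * card ?Bs = (\<Sum>K\<in>dcls d ` A. card (A \<inter> K) + card ?Bs)"
    by (simp add: sum.distrib card_slices[OF fin(1), of d])
  also have "\<dots> \<le> (\<Sum>K\<in>dcls d ` A. card (?F K) + 1)"
    by (rule sum_mono) (rule each)
  also have "\<dots> = (\<Sum>K\<in>dcls d ` A. card (?F K)) + card (dcls d ` A)"
    by (simp only: sum.distrib) simp
  also have "\<dots> = card (\<Union>K\<in>dcls d ` A. ?F K) + card (dcls d ` A)"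
    by (simp only: cardU)
  also have "\<dots> \<le> card (sumset A B) + card (dcls d ` A)"
    using card_mono[OF _ sub] fin by simp
  finally show ?thesis .
qed

lemma dcls_transl: "(\<lambda>y. y - b) ` dcls d (x + b) = dcls d x"
proof (rule set_eqI)
  fix z
  have "z \<in> (\<lambda>y. y - b) ` dcls d (x + b) \<longleftrightarrow> z + b \<in> dcls d (x + b)"
  proof
    assume "z \<in> (\<lambda>y. y - b) ` dcls d (x + b)"
    then obtain y where "y \<in> dcls d (x + b)" "z = y - b" by blast
    then show "z + b \<in> dcls d (x + b)" by simp
  next
    assume "z + b \<in> dcls d (x + b)"
    then show "z \<in> (\<lambda>y. y - b) ` dcls d (x + b)" by (rule rev_image_eqI) simp
  qed
  also have "\<dots> \<longleftrightarrow> z \<in> dcls d x" by (simp add: dcls_def drel_transl)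
  finally show "z \<in> (\<lambda>y. y - b) ` dcls d (x + b) \<longleftrightarrow> z \<in> dcls d x" .
qed

lemma key_iii:
  assumes fin: "finite A" "finite B" and b0: "b0 \<in> B"
  shows "card (dcls d ` A) \<le> card (dcls d ` sumset A B)"
proof -
  have "dcls d ` A = (\<lambda>K. (\<lambda>y. y - b0) ` K) ` (dcls d ` ((\<lambda>x. x + b0) ` A))"
    by (simp add: image_image dcls_transl)
  then have "card (dcls d ` A) \<le> card (dcls d ` ((\<lambda>x. x + b0) ` A))"
    by (metis card_image_le finite_imageI fin(1))
  also have "\<dots> \<le> card (dcls d ` sumset A B)"
  proof (rule card_mono)
    show "finite (dcls d ` sumset A B)" using fin by simp
    show "dcls d ` (\<lambda>x. x + b0) ` A \<subseteq> dcls d ` sumset A B"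
      by (rule image_mono) (use b0 in \<open>unfold image_subset_iff sumset_iff, blast\<close>)
  qed
  finally show ?thesis .
qed

lemma key_iv:
  assumes d: "inford d" and fin: "finite C"
  shows "card C + card (dcls d ` C) \<le> card (sumset C {u, u + d})"
proof -
  let ?T = "{c \<in> C. c + d \<notin> C}"
  let ?P = "(\<lambda>c. c + u) ` C" and ?Q = "(\<lambda>c. c + d + u) ` ?T"
  have finT: "finite ?T" using fin by simp
  have disj: "?P \<inter> ?Q = {}"
  proof (rule ccontr)
    assume "?P \<inter> ?Q \<noteq> {}"
    then obtain c c' where "c \<in> C" "c' \<in> ?T" "c + u = c' + d + u" by blast
    then show False by simp
  qed
  have sub: "?P \<union> ?Q \<subseteq> sumset C {u, u + d}"
  proof
    fix z assume "z \<in> ?P \<union> ?Q"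
    then consider c where "c \<in> C" "z = c + u" | c where "c \<in> C" "z = c + d + u" by blast
    then show "z \<in> sumset C {u, u + d}"
    proof cases
      case 1 then show ?thesis unfolding sumset_iff by blast
    next
      case 2
      then have "z = c + (u + d)" by (simp add: add_ac)
      with 2 show ?thesis unfolding sumset_iff by blast
    qed
  qed
  have clsT: "dcls d ` C \<subseteq> dcls d ` ?T"
  proof
    fix K assume "K \<in> dcls d ` C"
    then obtain c where c: "c \<in> C" "K = dcls d c" by blast
    obtain N where N: "c + nmul N d \<in> C" "\<forall>n. c + nmul n d \<in> C \<longrightarrow> n \<le> N"
      using top_exists[OF d fin c(1)] by blast
    have "c + nmul (Suc N) d \<notin> C" using N(2) by fastforce
    then have "c + nmul N d + d \<notin> C" by (simp add: nmul_Suc add_ac)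
    then have T: "c + nmul N d \<in> ?T" using N(1) by simp
    have "dcls d c = dcls d (c + nmul N d)" by (rule dcls_eq[OF drel_step])
    with T c show "K \<in> dcls d ` ?T" by blast
  qed
  have "card (dcls d ` C) \<le> card ?T"
    using card_mono[OF finite_imageI[OF finT] clsT] card_image_le[OF finT, of "dcls d"] by linarith
  moreover have "card ?P = card C" "card ?Q = card ?T"
    using card_transl[of u C] card_transl[of u "(\<lambda>c. c + d) ` ?T"] card_transl[of d ?T]
    by (simp_all add: image_image)
  moreover have "card (?P \<union> ?Q) = card ?P + card ?Q"
    by (rule card_Un_disjoint) (use fin disj in auto)
  moreover have "card (?P \<union> ?Q) \<le> card (sumset C {u, u + d})"
    by (rule card_mono[OF _ sub]) (simp add: fin)
  ultimately show ?thesis by linarith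
qed

lemma amgm: assumes "0 \<le> x" "0 \<le> (y::real)" shows "2 * sqrt (x*y) \<le> x + y"
proof -
  have "0 \<le> (sqrt x - sqrt y)^2" by simp
  also have "(sqrt x - sqrt y)^2 = x + y - 2 * sqrt (x*y)"
    using assms by (simp add: power2_diff real_sqrt_mult)
  finally show ?thesis by simp
qed

lemma amgm_pair:
  fixes a b al be :: real
  assumes "a > 0" "b > 0" "al \<ge> 0" "be \<ge> 0"
  shows "2 * sqrt (al*be) \<le> a*(be/b) + b*(al/a)"
proof -
  have e: "(a*(be/b)) * (b*(al/a)) = al*be" using assms by (simp add: field_simps)
  have "2 * sqrt ((a*(be/b)) * (b*(al/a))) \<le> a*(be/b) + b*(al/a)"
    by (rule amgm) (use assms in simp_all)
  then show ?thesis unfolding e .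
qed

lemma ineq_beta:
  fixes a b al be tA tB X :: real
  assumes "a > 0" "b > 0" "al \<ge> 0" "be \<ge> 0"
    "al + a*tB \<le> X" "be \<le> b*tB" "be + b*tA \<le> X" "al \<le> a*tA"
  shows "2 * sqrt (al*be) \<le> X"
proof -
  have "be / b \<le> tB" using assms by (simp add: divide_le_eq mult.commute)
  then have "a * (be/b) \<le> a * tB" by (rule mult_left_mono) (use assms(1) in simp)
  then have 1: "al + a*(be/b) \<le> X" using assms by linarith
  have "al / a \<le> tA" using assms by (simp add: divide_le_eq mult.commute)
  then have "b * (al/a) \<le> b * tA" by (rule mult_left_mono) (use assms(2) in simp)
  then have 2: "be + b*(al/a) \<le> X" using assms by linarith
  have 3: "2 * sqrt (al*be) \<le> al + be" using amgm assms by simp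
  have 4: "2 * sqrt (al*be) \<le> a*(be/b) + b*(al/a)" by (rule amgm_pair) (use assms in auto)
  show ?thesis using 1 2 3 4 by linarith
qed

lemma ineq_alpha:
  fixes a b al be tA tB X :: real
  assumes "a > 0" "b > 0" "al \<ge> 0" "be \<ge> 0"
    "al + a*tB \<le> X + a" "al + 2*a \<le> X + a" "be \<le> b*tB"
    "be + b*tA \<le> X + b" "be + 2*b \<le> X + b" "al \<le> a*tA"
  shows "3/2 * sqrt (al*be) \<le> X"
proof -
  have h1: "al + a*tB/2 \<le> X"
  proof (cases "tB \<ge> 2")
    case True
    then have "a*tB/2 \<le> a*tB - a" using assms(1) by (simp add: field_simps)
    then show ?thesis using assms by linarith
  next
    case False
    then have "a*tB/2 \<le> a" using assms(1) by (simp add: field_simps)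
    then show ?thesis using assms by linarith
  qed
  have h2: "be + b*tA/2 \<le> X"
  proof (cases "tA \<ge> 2")
    case True
    then have "b*tA/2 \<le> b*tA - b" using assms(2) by (simp add: field_simps)
    then show ?thesis using assms by linarith
  next
    case False
    then have "b*tA/2 \<le> b" using assms(2) by (simp add: field_simps)
    then show ?thesis using assms by linarith
  qed
  have "be / b \<le> tB" using assms by (simp add: divide_le_eq mult.commute)
  then have "a * (be/b) \<le> a * tB" by (rule mult_left_mono) (use assms(1) in simp)
  then have "a*(be/b)/2 \<le> a*tB/2" by (rule divide_right_mono) simp
  then have 1: "al + a*(be/b)/2 \<le> X" using h1 by linarith
  have "al / a \<le> tA" using assms by (simp add: divide_le_eq mult.commute)
  then have "b * (al/a) \<le> b * tA" by (rule mult_left_mono) (use assms(2) in simp)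
  then have "b*(al/a)/2 \<le> b*tA/2" by (rule divide_right_mono) simp
  then have 2: "be + b*(al/a)/2 \<le> X" using h2 by linarith
  have 3: "2 * sqrt (al*be) \<le> al + be" using amgm assms by simp
  have 4: "2 * sqrt (al*be) \<le> a*(be/b) + b*(al/a)" by (rule amgm_pair) (use assms in auto)
  have lin: "\<And>p q r::real. al + p/2 \<le> X \<Longrightarrow> be + q/2 \<le> X \<Longrightarrow> 2*r \<le> al+be \<Longrightarrow> 2*r \<le> p+q \<Longrightarrow> 3/2*r \<le> X"
    by linarith
  show ?thesis by (rule lin[OF 1 2 3 4])
qed

lemma torsion_fin_sub:
  assumes "finite V" "V \<subseteq> (torsion :: 'a::ab_group_add set)"
  shows "\<exists>K. finite K \<and> 0 \<in> K \<and> V \<subseteq> K \<and> (\<forall>x\<in>K. \<forall>y\<in>K. x + y \<in> K)"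
  using assms
proof (induction V rule: finite_induct)
  case empty
  show ?case by (rule exI[of _ "{0}"]) simp
next
  case (insert v V)
  obtain K' where K': "finite K'" "0 \<in> K'" "V \<subseteq> K'" "\<forall>x\<in>K'. \<forall>y\<in>K'. x + y \<in> K'"
    using insert by auto
  obtain n where n: "n > 0" "nmul n v = 0" using insert(4) by (auto simp: torsion_def)
  let ?K = "(\<lambda>(i,k). nmul i v + k) ` ({..<n} \<times> K')"
  have "finite ?K" using K' by simp
  moreover have "0 \<in> ?K" using K' n by (intro rev_image_eqI[of "(0,0)"]) auto
  moreover have "V \<subseteq> ?K"
  proof
    fix x assume "x \<in> V"
    then show "x \<in> ?K" using K' n by (intro rev_image_eqI[of "(0,x)"]) auto
  qed
  moreover have "v \<in> ?K"
  proof (rule rev_image_eqI[of "(1 mod n, 0)"])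
    show "(1 mod n, 0) \<in> {..<n} \<times> K'" using n K' by simp
    show "v = (case (1 mod n, 0) of (i, k) \<Rightarrow> nmul i v + k)" using nmul_mod[OF n(2), of 1] by (simp add: nmul_Suc)
  qed
  moreover have "\<forall>x\<in>?K. \<forall>y\<in>?K. x + y \<in> ?K"
  proof (intro ballI)
    fix x y assume "x \<in> ?K" "y \<in> ?K"
    then obtain i k j l where ik: "i < n" "k \<in> K'" "x = nmul i v + k" and jl: "j < n" "l \<in> K'" "y = nmul j v + l"
      by auto
    have "x + y = nmul ((i+j) mod n) v + (k + l)"
      using ik jl nmul_mod[OF n(2), of "i+j"] by (simp add: nmul_add add_ac)
    moreover have "((i+j) mod n, k + l) \<in> {..<n} \<times> K'" using n ik jl K' by simp
    ultimately show "x + y \<in> ?K" by (intro rev_image_eqI[of "((i+j) mod n, k + l)"]) auto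
  qed
  ultimately show ?case by blast
qed

lemma sqrt_le_card:
  assumes "finite A" "finite B" "A \<noteq> {}" "B \<noteq> {}"
  shows "sqrt (real (card A) * real (card B)) \<le> real (card (sumset A B))"
proof -
  obtain a b where ab: "a \<in> A" "b \<in> B" using assms by blast
  have 1: "card A \<le> card (sumset A B)" using card_sumset_ge[OF assms(1,2) ab(2)] .
  have 2: "card B \<le> card (sumset A B)" using card_sumset_ge[OF assms(2,1) ab(1)] by (simp add: sumset_comm)
  let ?s = "real (card (sumset A B))"
  have "real (card A) * real (card B) \<le> ?s * ?s"
    using 1 2 by (intro mult_mono) auto
  then have "sqrt (real (card A) * real (card B)) \<le> sqrt (?s * ?s)" by (rule real_sqrt_le_mono)
  also have "\<dots> = ?s" by simp
  finally show ?thesis .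
qed

lemma ratio_ge1:
  assumes "s \<le> (c::real)" "0 < s" shows "1 \<le> c / s"
  using assms by simp

lemma card_pos_ne: "finite A \<Longrightarrow> A \<noteq> {} \<Longrightarrow> 0 < real (card A)"
  by (simp add: card_gt_0_iff)

lemma inf_one:
  assumes "(1::real) \<in> S" "\<And>x. x \<in> S \<Longrightarrow> 1 \<le> x" shows "Inf S = 1"
  by (rule cInf_eq_minimum) (use assms in auto)

lemma nonempty2: "P a b \<Longrightarrow> {f A B | A B. P A B} \<noteq> {}" by blast

lemma img_card_pos: "finite A \<Longrightarrow> A \<noteq> {} \<Longrightarrow> 0 < card (h ` A)"
  by (simp add: card_gt_0_iff)

lemma beta_core:
  assumes d: "inford d" and fin: "finite A" "finite B" "finite U" and ne: "A \<noteq> {}" "B \<noteq> {}"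
    and u: "u \<in> U" "u + d \<in> U"
  shows "2 * sqrt (real (card A) * real (card B)) \<le> real (card (sumset (sumset A B) U))"
proof -
  let ?C = "sumset A B"
  have finC: "finite ?C" using fin by simp
  have 1: "card ?C + card (dcls d ` ?C) \<le> card (sumset ?C {u, u + d})" by (rule key_iv[OF d finC])
  have 2: "card (sumset ?C {u, u + d}) \<le> card (sumset ?C U)"
    by (rule card_mono) (use fin u in \<open>simp_all add: sumset_mono\<close>)
  obtain y0 where y0: "y0 \<in> B" "card B \<le> card (dcls d ` B) * card (B \<inter> dcls d y0)"
    using pigeon[where d=d, OF fin(2) ne(2)] by (elim bexE)
  obtain x0 where x0: "x0 \<in> A" "card A \<le> card (dcls d ` A) * card (A \<inter> dcls d x0)"
    using pigeon[where d=d, OF fin(1) ne(1)] by (elim bexE)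
  have k1: "card A + card (dcls d ` A) * card (B \<inter> dcls d y0) \<le> card ?C + card (dcls d ` A)"
    by (rule key_i[OF d fin(1,2) y0(1)])
  have k2: "card B + card (dcls d ` B) * card (A \<inter> dcls d x0) \<le> card ?C + card (dcls d ` B)"
    using key_i[OF d fin(2,1) x0(1)] by (simp only: sumset_comm[of B A])
  have m1: "card (dcls d ` A) \<le> card (dcls d ` ?C)" by (rule key_iii[OF fin(1,2) y0(1)])
  have m2: "card (dcls d ` B) \<le> card (dcls d ` ?C)"
    using key_iii[OF fin(2,1) x0(1)] by (simp only: sumset_comm[of B A])
  have apos: "0 < card (dcls d ` A)" "0 < card (dcls d ` B)" using fin ne by (simp_all add: img_card_pos)
  have n1: "card A + card (dcls d ` A) * card (B \<inter> dcls d y0) \<le> card ?C + card (dcls d ` ?C)"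
    using k1 m1 by linarith
  have n2: "card B + card (dcls d ` B) * card (A \<inter> dcls d x0) \<le> card ?C + card (dcls d ` ?C)"
    using k2 m2 by linarith
  have "2 * sqrt (real (card A) * real (card B)) \<le> real (card ?C + card (dcls d ` ?C))"
  proof (rule ineq_beta[of "real (card (dcls d ` A))" "real (card (dcls d ` B))" _ _
        "real (card (B \<inter> dcls d y0))" _ "real (card (A \<inter> dcls d x0))"])
    show "0 < real (card (dcls d ` A))" "0 < real (card (dcls d ` B))" using apos by simp_all
    show "0 \<le> real (card A)" "0 \<le> real (card B)" by simp_all
    show "real (card A) + real (card (dcls d ` A)) * real (card (B \<inter> dcls d y0)) \<le> real (card ?C + card (dcls d ` ?C))"
      using n1 by (simp only: of_nat_add[symmetric] of_nat_mult[symmetric] of_nat_le_iff)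
    show "real (card B) + real (card (dcls d ` B)) * real (card (A \<inter> dcls d x0)) \<le> real (card ?C + card (dcls d ` ?C))"
      using n2 by (simp only: of_nat_add[symmetric] of_nat_mult[symmetric] of_nat_le_iff)
    show "real (card B) \<le> real (card (dcls d ` B)) * real (card (B \<inter> dcls d y0))"
      using y0(2) by (simp only: of_nat_mult[symmetric] of_nat_le_iff)
    show "real (card A) \<le> real (card (dcls d ` A)) * real (card (A \<inter> dcls d x0))"
      using x0(2) by (simp only: of_nat_mult[symmetric] of_nat_le_iff)
  qed
  also have "\<dots> \<le> real (card (sumset ?C U))" using 1 2 by simp
  finally show ?thesis .
qed

lemma two_le_card:
  assumes "inford d" "finite B" "u \<in> B" "u + d \<in> B" shows "2 \<le> card (B \<inter> dcls d u)"
proof -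
  have "nmul 1 d \<noteq> 0" using assms(1) unfolding inford_def by simp
  then have "u \<noteq> u + d" by (simp add: nmul_Suc)
  then have "card {u, u + d} = 2" by simp
  moreover have "{u, u + d} \<subseteq> B \<inter> dcls d u"
    using assms drel_step[of d u 1] by (simp add: dcls_def nmul_Suc)
  moreover have "finite (B \<inter> dcls d u)" using assms by simp
  ultimately show ?thesis by (metis card_mono)
qed

lemma alpha_core:
  assumes d: "inford d" and fin: "finite A" "finite B"
    and u: "u \<in> A" "u + d \<in> A" "u \<in> B" "u + d \<in> B"
  shows "3/2 * sqrt (real (card A) * real (card B)) \<le> real (card (sumset A B))"
proof -
  let ?C = "sumset A B"
  have ne: "A \<noteq> {}" "B \<noteq> {}" using u by auto
  obtain y0 where y0: "y0 \<in> B" "card B \<le> card (dcls d ` B) * card (B \<inter> dcls d y0)"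
    using pigeon[where d=d, OF fin(2) ne(2)] by (elim bexE)
  obtain x0 where x0: "x0 \<in> A" "card A \<le> card (dcls d ` A) * card (A \<inter> dcls d x0)"
    using pigeon[where d=d, OF fin(1) ne(1)] by (elim bexE)
  have k1: "card A + card (dcls d ` A) * card (B \<inter> dcls d y0) \<le> card ?C + card (dcls d ` A)"
    by (rule key_i[OF d fin(1,2) y0(1)])
  have k2: "card B + card (dcls d ` B) * card (A \<inter> dcls d x0) \<le> card ?C + card (dcls d ` B)"
    using key_i[OF d fin(2,1) x0(1)] by (simp only: sumset_comm[of B A])
  have k1u: "card A + card (dcls d ` A) * card (B \<inter> dcls d u) \<le> card ?C + card (dcls d ` A)"
    by (rule key_i[OF d fin(1,2) u(3)])
  have k2u: "card B + card (dcls d ` B) * card (A \<inter> dcls d u) \<le> card ?C + card (dcls d ` B)"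
    using key_i[OF d fin(2,1) u(1)] by (simp only: sumset_comm[of B A])
  have t1: "2 \<le> card (B \<inter> dcls d u)" by (rule two_le_card[OF d fin(2) u(3,4)])
  have t2: "2 \<le> card (A \<inter> dcls d u)" by (rule two_le_card[OF d fin(1) u(1,2)])
  have n1: "card A + 2 * card (dcls d ` A) \<le> card ?C + card (dcls d ` A)"
    using k1u mult_le_mono2[OF t1, of "card (dcls d ` A)"] by linarith
  have n2: "card B + 2 * card (dcls d ` B) \<le> card ?C + card (dcls d ` B)"
    using k2u mult_le_mono2[OF t2, of "card (dcls d ` B)"] by linarith
  have apos: "0 < card (dcls d ` A)" "0 < card (dcls d ` B)" using fin ne by (simp_all add: img_card_pos)
  show ?thesis
  proof (rule ineq_alpha[of "real (card (dcls d ` A))" "real (card (dcls d ` B))" _ _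
        "real (card (B \<inter> dcls d y0))" _ "real (card (A \<inter> dcls d x0))"])
    show "0 < real (card (dcls d ` A))" "0 < real (card (dcls d ` B))" using apos by simp_all
    show "0 \<le> real (card A)" "0 \<le> real (card B)" by simp_all
    show "real (card A) + real (card (dcls d ` A)) * real (card (B \<inter> dcls d y0)) \<le> real (card ?C) + real (card (dcls d ` A))"
      using k1 by (simp only: of_nat_add[symmetric] of_nat_mult[symmetric] of_nat_le_iff)
    show "real (card B) + real (card (dcls d ` B)) * real (card (A \<inter> dcls d x0)) \<le> real (card ?C) + real (card (dcls d ` B))"
      using k2 by (simp only: of_nat_add[symmetric] of_nat_mult[symmetric] of_nat_le_iff)
    show "real (card A) + 2 * real (card (dcls d ` A)) \<le> real (card ?C) + real (card (dcls d ` A))"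
      using n1 by simp
    show "real (card B) + 2 * real (card (dcls d ` B)) \<le> real (card ?C) + real (card (dcls d ` B))"
      using n2 by simp
    show "real (card B) \<le> real (card (dcls d ` B)) * real (card (B \<inter> dcls d y0))"
      using y0(2) by (simp only: of_nat_mult[symmetric] of_nat_le_iff)
    show "real (card A) \<le> real (card (dcls d ` A)) * real (card (A \<inter> dcls d x0))"
      using x0(2) by (simp only: of_nat_mult[symmetric] of_nat_le_iff)
  qed
qed

theorem mainTheorem19:
  fixes U :: "'a::ab_group_add set"
  assumes "finite U" and "U \<noteq> {}"
  shows "(in_single_torsion_coset U \<longrightarrow>
            alpha U = 1 \<and> alpha' U = 1 \<and> alpha'' U = 1 \<and>
            beta U = 1 \<and> beta' U = 1 \<and> beta'' U = 1)
       \<and> (\<not> in_single_torsion_coset U \<longrightarrow> beta U \<ge> 2 \<and> alpha U \<ge> 3/2)"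
proof (intro conjI impI)
  assume "in_single_torsion_coset U"
  then obtain g where g: "\<forall>u\<in>U. u - g \<in> torsion" by (auto simp: in_single_torsion_coset_def)
  have f1: "finite ((\<lambda>u. u - g) ` U)" using assms(1) by (rule finite_imageI)
  have f2: "(\<lambda>u. u - g) ` U \<subseteq> torsion" using g by (simp add: image_subset_iff)
  have "\<exists>K. finite K \<and> 0 \<in> K \<and> (\<lambda>u. u - g) ` U \<subseteq> K \<and> (\<forall>x\<in>K. \<forall>y\<in>K. x + y \<in> K)"
    by (rule torsion_fin_sub[OF f1 f2])
  then obtain K where K: "finite K" "0 \<in> K" "(\<lambda>u. u - g) ` U \<subseteq> K" "\<forall>x\<in>K. \<forall>y\<in>K. x + y \<in> K"
    by (elim exE conjE)
  have Kne: "K \<noteq> {}" using K by blast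
  have cK: "0 < real (card K)" using card_pos_ne[OF K(1) Kne] .
  obtain u0 where u0: "u0 \<in> U" using assms by blast
  define A where "A = (\<lambda>k. g + k) ` K"
  have finA: "finite A" and Ane: "A \<noteq> {}" using K Kne by (auto simp: A_def)
  have cA: "card A = card K" unfolding A_def by (rule card_transl')
  have UA: "U \<subseteq> A"
  proof
    fix u assume "u \<in> U"
    then have "u - g \<in> K" using K(3) by blast
    then show "u \<in> A" unfolding A_def by (rule rev_image_eqI) simp
  qed
  have "sumset A A \<subseteq> (\<lambda>k. (g + g) + k) ` K"
  proof
    fix z assume "z \<in> sumset A A"
    then obtain k l where kl: "k \<in> K" "l \<in> K" "z = (g + k) + (g + l)" unfolding sumset_iff A_def by blast
    then have "z = (g + g) + (k + l)" by (simp add: add_ac)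
    moreover have "k + l \<in> K" using K(4) kl by blast
    ultimately show "z \<in> (\<lambda>k. (g + g) + k) ` K" by (intro rev_image_eqI[of "k + l"])
  qed
  then have "card (sumset A A) \<le> card ((\<lambda>k. (g + g) + k) ` K)"
    by (rule card_mono[OF finite_imageI[OF K(1)]])
  then have "card (sumset A A) \<le> card K" by (simp only: card_transl')
  moreover have "card A \<le> card (sumset A A)"
    using card_sumset_ge[OF finA finA] UA u0 by (meson subsetD)
  ultimately have cAA: "card (sumset A A) = card A" using cA by simp
  have "sumset (sumset K K) U \<subseteq> (\<lambda>k. g + k) ` K"
  proof
    fix z assume "z \<in> sumset (sumset K K) U"
    then have "\<exists>w\<in>sumset K K. \<exists>u\<in>U. z = w + u" by (simp only: sumset_iff)
    then obtain w u where wu: "w \<in> sumset K K" "u \<in> U" "z = w + u" by blast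
    from wu(1) have "\<exists>k\<in>K. \<exists>l\<in>K. w = k + l" by (simp only: sumset_iff)
    then obtain k l where kl: "k \<in> K" "l \<in> K" "w = k + l" by blast
    have klu: "k \<in> K" "l \<in> K" "u \<in> U" "z = (k + l) + u" using wu kl by simp_all
    have "z = g + ((k + l) + (u - g))" using klu(4) by (simp add: algebra_simps)
    moreover have "(k + l) + (u - g) \<in> K"
    proof -
      have ug: "u - g \<in> K" using K(3) klu(3) by (simp add: image_subset_iff)
      have "k + l \<in> K" using K(4) klu(1,2) by simp
      then show ?thesis using K(4) ug by simp
    qed
    ultimately show "z \<in> (\<lambda>k. g + k) ` K" by (intro rev_image_eqI[of "(k + l) + (u - g)"])
  qed
  then have "card (sumset (sumset K K) U) \<le> card ((\<lambda>k. g + k) ` K)"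
    by (rule card_mono[OF finite_imageI[OF K(1)]])
  then have "card (sumset (sumset K K) U) \<le> card K" by (simp only: card_transl')
  moreover have "card K \<le> card (sumset K K)" using card_sumset_ge[OF K(1) K(1) K(2)] .
  moreover have "card (sumset K K) \<le> card (sumset (sumset K K) U)"
    using card_sumset_ge[OF finite_sumset[OF K(1) K(1)] assms(1) u0] .
  ultimately have cKU: "card (sumset (sumset K K) U) = card K" by simp
  have sqK: "sqrt (real (card K) * real (card K)) = real (card K)" by simp
  have lbab: "1 \<le> real (card (sumset A B)) / sqrt (real (card A) * real (card B))"
    if AB: "finite A" "A \<noteq> {}" "finite B" "B \<noteq> {}" for A B :: "'a set"
  proof (rule ratio_ge1)
    show "sqrt (real (card A) * real (card B)) \<le> real (card (sumset A B))"
      by (rule sqrt_le_card[OF AB(1,3,2,4)])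
    have "0 < card A" "0 < card B" using AB by (simp_all add: card_gt_0_iff)
    then show "0 < sqrt (real (card A) * real (card B))" by simp
  qed
  have lbb: "1 \<le> real (card (sumset (sumset A B) U)) / sqrt (real (card A) * real (card B))"
    if AB: "finite A" "A \<noteq> {}" "finite B" "B \<noteq> {}" for A B :: "'a set"
  proof (rule ratio_ge1)
    have "0 < card A" "0 < card B" using AB by (simp_all add: card_gt_0_iff)
    then show "0 < sqrt (real (card A) * real (card B))" by simp
    have "card (sumset A B) \<le> card (sumset (sumset A B) U)"
      using card_sumset_ge[OF finite_sumset[OF AB(1,3)] assms(1) u0] .
    then show "sqrt (real (card A) * real (card B)) \<le> real (card (sumset (sumset A B) U))"
      using sqrt_le_card[OF AB(1,3,2,4)] by linarith
  qed
  have lba: "1 \<le> real (card (sumset A B)) / real (card A)"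
    if AB: "finite A" "A \<noteq> {}" "finite B" "B \<noteq> {}" for A B :: "'a set"
  proof (rule ratio_ge1)
    have "0 < card A" using AB by (simp add: card_gt_0_iff)
    then show "0 < real (card A)" by simp
    obtain b where "b \<in> B" using AB by blast
    then have "card A \<le> card (sumset A B)" by (rule card_sumset_ge[OF AB(1,3)])
    then show "real (card A) \<le> real (card (sumset A B))" by simp
  qed
  have lbb'': "1 \<le> real (card (sumset (sumset A A) U)) / real (card A)"
    if AA: "finite A" "A \<noteq> {}" for A :: "'a set"
  proof (rule ratio_ge1)
    have "0 < card A" using AA by (simp add: card_gt_0_iff)
    then show "0 < real (card A)" by simp
    obtain a where a: "a \<in> A" using AA by blast
    have "card A \<le> card (sumset A A)" using card_sumset_ge[OF AA(1,1) a] .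
    moreover have "card (sumset A A) \<le> card (sumset (sumset A A) U)"
      using card_sumset_ge[OF finite_sumset[OF AA(1,1)] assms(1) u0] .
    ultimately show "real (card A) \<le> real (card (sumset (sumset A A) U))" by simp
  qed
  have rA: "real (card (sumset A A)) / sqrt (real (card A) * real (card A)) = 1"
    using cAA cA cK by simp
  have rA': "real (card (sumset A A)) / real (card A) = 1" using cAA cA cK by simp
  have rK: "real (card (sumset (sumset K K) U)) / sqrt (real (card K) * real (card K)) = 1"
    using cKU cK by simp
  have rK': "real (card (sumset (sumset K K) U)) / real (card K) = 1" using cKU cK by simp
  show "alpha U = 1" unfolding alpha_def
    apply (rule inf_one)
    subgoal by (unfold mem_Collect_eq, intro exI[of _ A] conjI) (use rA finA Ane UA cAA cA cK cKU in simp_all)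
    subgoal by (unfold mem_Collect_eq, elim exE conjE, hypsubst, rule lbab, assumption+)
    done
  show "alpha' U = 1" unfolding alpha'_def
    apply (rule inf_one)
    subgoal by (unfold mem_Collect_eq, intro exI[of _ A] conjI) (use rA' finA Ane UA cAA cA cK cKU in simp_all)
    subgoal by (unfold mem_Collect_eq, elim exE conjE, hypsubst, rule lba, assumption+)
    done
  show "alpha'' U = 1" unfolding alpha''_def
    apply (rule inf_one)
    subgoal by (unfold mem_Collect_eq, intro exI[of _ A] conjI) (use rA' finA Ane UA cAA cA cK cKU in simp_all)
    subgoal by (unfold mem_Collect_eq, elim exE conjE, hypsubst, rule lba, assumption+)
    done
  show "beta U = 1" unfolding beta_def
    apply (rule inf_one)
    subgoal by (unfold mem_Collect_eq, intro exI[of _ K] conjI) (use rK K(1) Kne cK cKU cAA cA in simp_all)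
    subgoal by (unfold mem_Collect_eq, elim exE conjE, hypsubst, rule lbb, assumption+)
    done
  show "beta' U = 1" unfolding beta'_def
    apply (rule inf_one)
    subgoal by (unfold mem_Collect_eq, intro exI[of _ K] conjI) (use rK K(1) Kne cK cKU cAA cA in simp_all)
    subgoal by (unfold mem_Collect_eq, elim exE conjE, hypsubst, rule lbb, assumption+)
    done
  show "beta'' U = 1" unfolding beta''_def
    apply (rule inf_one)
    subgoal by (unfold mem_Collect_eq, intro exI[of _ K] conjI) (use rK' K(1) Kne cK cKU cAA cA in simp_all)
    subgoal by (unfold mem_Collect_eq, elim exE conjE, hypsubst, rule lbb'', assumption+)
    done
next
  assume nc: "\<not> in_single_torsion_coset U"
  obtain u1 where u1: "u1 \<in> U" using assms(2) by blast
  have "\<not> (\<forall>u\<in>U. u - u1 \<in> torsion)"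
  proof
    assume "\<forall>u\<in>U. u - u1 \<in> torsion"
    then have "in_single_torsion_coset U" unfolding in_single_torsion_coset_def by (rule exI)
    with nc show False by simp
  qed
  then obtain u2 where u2: "u2 \<in> U" "u2 - u1 \<notin> torsion" by blast
  define d where "d = u2 - u1"
  have d: "inford d" unfolding inford_def
  proof (intro allI impI)
    fix n :: nat assume "n > 0"
    then show "nmul n d \<noteq> 0" using u2(2) unfolding torsion_def d_def by blast
  qed
  have u1d: "u1 + d \<in> U" using u2(1) by (simp add: d_def)
  show "beta U \<ge> 2" unfolding beta_def
  proof (rule cInf_greatest)
    show "{real (card (sumset (sumset A B) U)) / sqrt (real (card A) * real (card B)) | A B.
      finite A \<and> A \<noteq> {} \<and> finite B \<and> B \<noteq> {}} \<noteq> {}"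
      by (rule nonempty2[of _ U U]) (use assms in simp)
    fix x assume "x \<in> {real (card (sumset (sumset A B) U)) / sqrt (real (card A) * real (card B)) | A B.
      finite A \<and> A \<noteq> {} \<and> finite B \<and> B \<noteq> {}}"
    then obtain A B where AB: "x = real (card (sumset (sumset A B) U)) / sqrt (real (card A) * real (card B))"
      "finite A" "A \<noteq> {}" "finite B" "B \<noteq> {}" by (elim CollectE exE conjE)
    have "0 < card A" "0 < card B" using AB by (simp_all add: card_gt_0_iff)
    then have sp: "0 < sqrt (real (card A) * real (card B))" by simp
    have "2 * sqrt (real (card A) * real (card B)) \<le> real (card (sumset (sumset A B) U))"
      by (rule beta_core[OF d AB(2,4) assms(1) AB(3,5) u1 u1d])
    then show "2 \<le> x" unfolding AB(1) using sp by (simp add: pos_le_divide_eq)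
  qed
  show "alpha U \<ge> 3/2" unfolding alpha_def
  proof (rule cInf_greatest)
    show "{real (card (sumset A B)) / sqrt (real (card A) * real (card B)) | A B.
      finite A \<and> A \<noteq> {} \<and> finite B \<and> B \<noteq> {} \<and> U \<subseteq> A \<and> U \<subseteq> B} \<noteq> {}"
      by (rule nonempty2[of _ U U]) (use assms in simp)
    fix x assume "x \<in> {real (card (sumset A B)) / sqrt (real (card A) * real (card B)) | A B.
      finite A \<and> A \<noteq> {} \<and> finite B \<and> B \<noteq> {} \<and> U \<subseteq> A \<and> U \<subseteq> B}"
    then obtain A B where AB: "x = real (card (sumset A B)) / sqrt (real (card A) * real (card B))"
      "finite A" "A \<noteq> {}" "finite B" "B \<noteq> {}" "U \<subseteq> A" "U \<subseteq> B" by (elim CollectE exE conjE)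
    have "0 < card A" "0 < card B" using AB by (simp_all add: card_gt_0_iff)
    then have sp: "0 < sqrt (real (card A) * real (card B))" by simp
    have uu: "u1 \<in> A" "u1 + d \<in> A" "u1 \<in> B" "u1 + d \<in> B" using AB(6,7) u1 u1d by (simp_all add: subsetD)
    have "3/2 * sqrt (real (card A) * real (card B)) \<le> real (card (sumset A B))"
      by (rule alpha_core[OF d AB(2,4) uu])
    then show "3/2 \<le> x" unfolding AB(1) using sp by (simp add: pos_le_divide_eq)
  qed
qed


end
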